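(* Let $\{A,B\}\cup\{C_\alpha:\alpha<\omega_1\}$ be a partition of $\omega_1$ with $|A|=|B|=\omega_1$ and $|C_\alpha|=\omega$ for all $\alpha<\omega_1$. Let $\mathbb X=\langle\omega_1,\rho\rangle$ and $\mathbb Y=\langle\omega_1,\sigma\rangle$ where $\rho$ is the equivalence relation whose classes are $A\cup B$ and the $C_\alpha$ ($\alpha<\omega_1$), and $\sigma$ the one whose classes are $A$, $B$ and the $C_\alpha$ ($\alpha<\omega_1$). Then $\mathbb X\sim_c\mathbb Y$, $\mathbb X\equiv_{\infty\omega}\mathbb Y$, and $\mathbb X\not\cong\mathbb Y$.
   Context: A condensation from $\langle X,\rho\rangle$ onto $\langle Y,\sigma\rangle$ is a bijection $F:X\to Y$ with $x\,\rho\,x'\Rightarrow F(x)\,\sigma\,F(x')$; $\mathbb X\sim_c\mathbb Y$ means condensations exist in both directions. $\mathbb X\equiv_{\infty\omega}\mathbb Y$ means $\mathbb X$ and $\mathbb Y$ satisfy the same sentences of the infinitary logic $L_{\infty\omega}$ (language with one binary relation symbol). *)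

theory Defs
  imports Main "HOL-Library.Countable_Set"
begin

(* Binary relational structures (universe = type): the universe of a structure is the whole type. *)

definition condensation :: "('a \<Rightarrow> 'a \<Rightarrow> bool) \<Rightarrow> ('b \<Rightarrow> 'b \<Rightarrow> bool) \<Rightarrow> ('a \<Rightarrow> 'b) \<Rightarrow> bool" where
  "condensation R S F \<longleftrightarrow> bij F \<and> (\<forall>x x'. R x x' \<longrightarrow> S (F x) (F x'))"

definition sim_c :: "('a \<Rightarrow> 'a \<Rightarrow> bool) \<Rightarrow> ('b \<Rightarrow> 'b \<Rightarrow> bool) \<Rightarrow> bool" where
  "sim_c R S \<longleftrightarrow> (\<exists>F. condensation R S F) \<and> (\<exists>G. condensation S R G)"

definition isomorphic :: "('a \<Rightarrow> 'a \<Rightarrow> bool) \<Rightarrow> ('b \<Rightarrow> 'b \<Rightarrow> bool) \<Rightarrow> bool" where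
  "isomorphic R S \<longleftrightarrow> (\<exists>F. bij F \<and> (\<forall>x x'. R x x' \<longleftrightarrow> S (F x) (F x')))"

(* Formulas of the infinitary logic with one binary relation symbol; conjunctions
   are indexed by the type 'i (repetitions allowed), variables are natural numbers. *)
datatype 'i fm =
    Eq nat nat
  | Rel nat nat
  | Neg "'i fm"
  | Conj "'i \<Rightarrow> 'i fm"
  | Exi nat "'i fm"

primrec fv :: "'i fm \<Rightarrow> nat set" where
  "fv (Eq x y) = {x, y}"
| "fv (Rel x y) = {x, y}"
| "fv (Neg \<phi>) = fv \<phi>"
| "fv (Conj f) = (\<Union>i. fv (f i))"
| "fv (Exi x \<phi>) = fv \<phi> - {x}"

primrec sat :: "('a \<Rightarrow> 'a \<Rightarrow> bool) \<Rightarrow> (nat \<Rightarrow> 'a) \<Rightarrow> 'i fm \<Rightarrow> bool" where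
  "sat R v (Eq x y) = (v x = v y)"
| "sat R v (Rel x y) = R (v x) (v y)"
| "sat R v (Neg \<phi>) = (\<not> sat R v \<phi>)"
| "sat R v (Conj f) = (\<forall>i. sat R v (f i))"
| "sat R v (Exi x \<phi>) = (\<exists>a. sat R (v(x := a)) \<phi>)"

(* Same sentences (formulas without free variables) with conjunctions indexed by 'i.
   Quantifying over all types 'i gives L_{\<infinity>\<omega>}-equivalence. *)
definition inf_equiv :: "'i itself \<Rightarrow> ('a \<Rightarrow> 'a \<Rightarrow> bool) \<Rightarrow> ('b \<Rightarrow> 'b \<Rightarrow> bool) \<Rightarrow> bool" where
  "inf_equiv _ R S \<longleftrightarrow>
     (\<forall>\<phi> :: 'i fm. fv \<phi> = {} \<longrightarrow> (\<forall>v w. sat R v \<phi> \<longleftrightarrow> sat S w \<phi>))"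

end

theory Submission
  imports Defs "HOL-Library.Countable_Set_Type"
begin


definition pi :: "('a \<Rightarrow> 'a \<Rightarrow> bool) \<Rightarrow> ('b \<Rightarrow> 'b \<Rightarrow> bool) \<Rightarrow> (nat \<Rightarrow> 'a) \<Rightarrow> (nat \<Rightarrow> 'b) \<Rightarrow> nat set \<Rightarrow> bool" where
  "pi R S v w D \<longleftrightarrow> (\<forall>i\<in>D. \<forall>j\<in>D. (v i = v j \<longleftrightarrow> w i = w j) \<and> (R (v i) (v j) \<longleftrightarrow> S (w i) (w j)))"

definition good :: "('a \<Rightarrow> 'a \<Rightarrow> bool) \<Rightarrow> bool" where
  "good R \<longleftrightarrow> (\<forall>x. R x x) \<and> (\<forall>x y. R x y \<longrightarrow> R y x) \<and> (\<forall>x y z. R x y \<longrightarrow> R y z \<longrightarrow> R x z)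
     \<and> (\<forall>x. infinite {y. R x y}) \<and> (\<forall>F. finite F \<longrightarrow> (\<exists>y. \<forall>z\<in>F. \<not> R z y))"

lemma pi_mono: "pi R S v w D \<Longrightarrow> E \<subseteq> D \<Longrightarrow> pi R S v w E"
  unfolding pi_def by blast

lemma pi_sym: "pi R S v w D \<Longrightarrow> pi S R w v D"
  unfolding pi_def by blast

lemma good_refl: "good R \<Longrightarrow> R x x" unfolding good_def by (drule conjunct1) (erule spec)
lemma good_sym: "good R \<Longrightarrow> R x y \<Longrightarrow> R y x" unfolding good_def
  by (drule conjunct2, drule conjunct1) (erule allE, erule allE, erule mp)
lemma good_trans: "good R \<Longrightarrow> R x y \<Longrightarrow> R y z \<Longrightarrow> R x z" unfolding good_def
  by (drule conjunct2, drule conjunct2, drule conjunct1) blast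
lemma good_inf: "good R \<Longrightarrow> infinite {y. R x y}" unfolding good_def
  by (drule conjunct2, drule conjunct2, drule conjunct2, drule conjunct1) (erule allE)
lemma good_new: "good R \<Longrightarrow> finite F \<Longrightarrow> \<exists>y. \<forall>z\<in>F. \<not> R z y" unfolding good_def
  by (drule conjunct2, drule conjunct2, drule conjunct2, drule conjunct2) (erule allE, erule mp)

lemma pi_ext:
  assumes gR: "good R" and gS: "good S" and fin: "finite D" and p: "pi R S v w D"
  shows "\<exists>b. pi R S (v(x:=a)) (w(x:=b)) (insert x D)"
proof -
  define D' where "D' = D - {x}"
  have p': "pi R S v w D'" using p pi_mono D'_def by blast
  have fin': "finite D'" using fin D'_def by simp
  have ins: "insert x D = insert x D'" unfolding D'_def by blast
  have xD': "x \<notin> D'" unfolding D'_def by blast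
  note Rr = good_refl[OF gR] and Rs = good_sym[OF gR] and Rt = good_trans[OF gR]
  note Sr = good_refl[OF gS] and Ss = good_sym[OF gS] and St = good_trans[OF gS]
    and Sinf = good_inf[OF gS] and Snew = good_new[OF gS]
  have "\<exists>b. \<forall>i\<in>D'. (a = v i \<longleftrightarrow> b = w i) \<and> (R a (v i) \<longleftrightarrow> S b (w i))"
  proof (cases "\<exists>i\<in>D'. a = v i")
    case True
    then obtain i where i: "i \<in> D'" "a = v i" by blast
    show ?thesis
      by (rule exI[of _ "w i"]) (use p' i in \<open>auto simp: pi_def\<close>)
  next
    case F1: False
    show ?thesis
    proof (cases "\<exists>i\<in>D'. R a (v i)")
      case True
      then obtain i where i: "i \<in> D'" "R a (v i)" by blast
      have "infinite ({y. S (w i) y} - w ` D')" using Sinf fin' by auto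
      then obtain b where "b \<in> {y. S (w i) y} - w ` D'"
        using infinite_imp_nonempty by blast
      hence b: "S (w i) b" "b \<notin> w ` D'" by auto
      show ?thesis
      proof (rule exI[of _ b], intro ballI conjI)
        fix j assume j: "j \<in> D'"
        show "a = v j \<longleftrightarrow> b = w j" using F1 b j by blast
        have "R a (v j) \<longleftrightarrow> R (v i) (v j)" using Rt[OF i(2), of "v j"] Rt[OF Rs[OF i(2)], of "v j"] by blast
        also have "\<dots> \<longleftrightarrow> S (w i) (w j)" using p' i j unfolding pi_def by blast
        also have "\<dots> \<longleftrightarrow> S b (w j)" using St[OF b(1), of "w j"] St[OF Ss[OF b(1)], of "w j"] by blast
        finally show "R a (v j) \<longleftrightarrow> S b (w j)" .
      qed
    next
      case False
      obtain b where b: "\<forall>z\<in>w ` D'. \<not> S z b" using Snew fin' by blast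
      show ?thesis
      proof (rule exI[of _ b], intro ballI conjI)
        fix j assume j: "j \<in> D'"
        have "\<not> S (w j) b" using b j by blast
        hence "\<not> S b (w j)" "b \<noteq> w j" using Ss[of b "w j"] Sr[of b] by auto
        thus "a = v j \<longleftrightarrow> b = w j" "R a (v j) \<longleftrightarrow> S b (w j)" using F1 False j by auto
      qed
    qed
  qed
  then obtain b where b: "\<forall>i\<in>D'. (a = v i \<longleftrightarrow> b = w i) \<and> (R a (v i) \<longleftrightarrow> S b (w i))" by blast
  have "pi R S (v(x:=a)) (w(x:=b)) (insert x D')"
    unfolding pi_def
  proof (intro ballI)
    fix i j assume i: "i \<in> insert x D'" and j: "j \<in> insert x D'"
    show "((v(x:=a)) i = (v(x:=a)) j \<longleftrightarrow> (w(x:=b)) i = (w(x:=b)) j) \<and>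
          (R ((v(x:=a)) i) ((v(x:=a)) j) \<longleftrightarrow> S ((w(x:=b)) i) ((w(x:=b)) j))"
    proof (cases "i = x"; cases "j = x")
      assume "i = x" "j = x" thus ?thesis using Rr Sr by simp
    next
      assume "i = x" "j \<noteq> x" thus ?thesis using b j by simp
    next
      assume "i \<noteq> x" "j = x"
      moreover have "R (v i) a = R a (v i)" "S (w i) b = S b (w i)" using Rs Ss by blast+
      ultimately show ?thesis using b i by (simp add: eq_commute)
    next
      assume "i \<noteq> x" "j \<noteq> x" thus ?thesis using p' i j unfolding pi_def by auto
    qed
  qed
  thus ?thesis using ins by auto
qed

lemma fv_Exi_sub: "fv \<psi> \<subseteq> insert x (fv (Exi x \<psi>))" by auto

lemma sat_pi:
  assumes gR: "good R" and gS: "good S"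
  shows "finite (fv \<phi>) \<Longrightarrow> pi R S v w (fv \<phi>) \<Longrightarrow> sat R v \<phi> = sat S w \<phi>"
proof (induction \<phi> arbitrary: v w)
  case (Eq x y) thus ?case by (simp add: pi_def)
next
  case (Rel x y) thus ?case by (simp add: pi_def)
next
  case (Neg \<phi>) thus ?case by simp
next
  case (Conj f)
  have "\<And>i. sat R v (f i) = sat S w (f i)"
  proof -
    fix i
    have sub: "fv (f i) \<subseteq> fv (Conj f)" by auto
    show "sat R v (f i) = sat S w (f i)"
      by (rule Conj.IH[OF rangeI]) (rule finite_subset[OF sub Conj.prems(1)], rule pi_mono[OF Conj.prems(2) sub])
  qed
  thus ?case by simp
next
  case (Exi x \<psi>)
  have fin: "finite (fv \<psi>)" using Exi.prems(1) fv_Exi_sub[of \<psi> x] finite_subset by blast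
  show ?case
  proof
    assume "sat R v (Exi x \<psi>)"
    then obtain a where a: "sat R (v(x:=a)) \<psi>" by auto
    obtain b where "pi R S (v(x:=a)) (w(x:=b)) (insert x (fv (Exi x \<psi>)))"
      using pi_ext[OF gR gS Exi.prems] by blast
    hence "pi R S (v(x:=a)) (w(x:=b)) (fv \<psi>)" using pi_mono fv_Exi_sub by metis
    hence "sat S (w(x:=b)) \<psi>" using Exi.IH[OF fin] a by metis
    thus "sat S w (Exi x \<psi>)" by auto
  next
    assume "sat S w (Exi x \<psi>)"
    then obtain b where b: "sat S (w(x:=b)) \<psi>" by auto
    obtain a where "pi S R (w(x:=b)) (v(x:=a)) (insert x (fv (Exi x \<psi>)))"
      using pi_ext[OF gS gR Exi.prems(1) pi_sym[OF Exi.prems(2)]] by blast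
    hence "pi R S (v(x:=a)) (w(x:=b)) (fv \<psi>)" using pi_mono[OF pi_sym fv_Exi_sub] by metis
    hence "sat R (v(x:=a)) \<psi>" using Exi.IH[OF fin] b by metis
    thus "sat R v (Exi x \<psi>)" by auto
  qed
qed

lemma good_inf_equiv: "good R \<Longrightarrow> good S \<Longrightarrow> inf_equiv TYPE('i) R S"
  unfolding inf_equiv_def
  using sat_pi[of R S, where v=v and w=w for v w]
  by (metis finite.emptyI pi_def empty_iff)



locale setting =
  fixes A B :: "'a set" and C :: "'a \<Rightarrow> 'a set"
    and \<rho> \<sigma> :: "'a \<Rightarrow> 'a \<Rightarrow> bool"
  assumes omega1: "(card_of (UNIV :: 'a set), cardSuc natLeq) \<in> ordIso"
    and AB: "A \<inter> B = {}"
    and AC: "\<And>\<alpha>. A \<inter> C \<alpha> = {}"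
    and BC: "\<And>\<alpha>. B \<inter> C \<alpha> = {}"
    and CC: "\<And>\<alpha> \<beta>. \<alpha> \<noteq> \<beta> \<Longrightarrow> C \<alpha> \<inter> C \<beta> = {}"
    and cover: "A \<union> B \<union> (\<Union>\<alpha>. C \<alpha>) = UNIV"
    and cardA: "(card_of A, card_of (UNIV :: 'a set)) \<in> ordIso"
    and cardB: "(card_of B, card_of (UNIV :: 'a set)) \<in> ordIso"
    and cardC: "\<And>\<alpha>. countable (C \<alpha>) \<and> infinite (C \<alpha>)"
    and rho: "\<And>x y. \<rho> x y \<longleftrightarrow> (x \<in> A \<union> B \<and> y \<in> A \<union> B) \<or> (\<exists>\<alpha>. x \<in> C \<alpha> \<and> y \<in> C \<alpha>)"
    and sigma: "\<And>x y. \<sigma> x y \<longleftrightarrow> (x \<in> A \<and> y \<in> A) \<or> (x \<in> B \<and> y \<in> B) \<or> (\<exists>\<alpha>. x \<in> C \<alpha> \<and> y \<in> C \<alpha>)"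
begin

lemma Cuniq: "x \<in> C \<alpha> \<Longrightarrow> x \<in> C \<beta> \<Longrightarrow> \<alpha> = \<beta>"
  using CC by blast

lemma CA: "x \<in> C \<alpha> \<Longrightarrow> x \<notin> A" using AC by blast
lemma CAB: "x \<in> C \<alpha> \<Longrightarrow> x \<notin> A \<union> B" using AC BC by blast
lemma CB: "x \<in> C \<alpha> \<Longrightarrow> x \<notin> B" using BC by blast

lemma Cinf: "infinite (C \<alpha>)" using cardC by blast
lemma Ccnt: "countable (C \<alpha>)" using cardC by blast
lemma Cne: "\<exists>x. x \<in> C \<alpha>" using Cinf by (metis ex_in_conv finite.emptyI)

lemma uncountable_iso:
  assumes "(card_of X, card_of (UNIV :: 'a set)) \<in> ordIso"
  shows "\<not> countable X"
proof
  assume "countable X"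
  hence "(card_of X, natLeq) \<in> ordLeq" using countable_card_le_natLeq by blast
  moreover have "(cardSuc natLeq, card_of X) \<in> ordIso"
    using ordIso_transitive[OF assms omega1] ordIso_symmetric by blast
  ultimately have "(cardSuc natLeq, natLeq) \<in> ordLeq" using ordIso_ordLeq_trans by blast
  thus False using cardSuc_greater[OF natLeq_Card_order] not_ordLess_ordLeq by blast
qed

lemma uncA: "\<not> countable A" using uncountable_iso[OF cardA] .
lemma uncB: "\<not> countable B" using uncountable_iso[OF cardB] .
lemma uncU: "\<not> countable (UNIV :: 'a set)"
  using uncountable_iso[OF card_of_refl] .
lemma infU: "infinite (UNIV :: 'a set)" using uncU countable_finite by blast
lemma infA: "infinite A" using uncA countable_finite by blast
lemma infB: "infinite B" using uncB countable_finite by blast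

lemma finite_hit: "finite F \<Longrightarrow> finite {\<alpha>. C \<alpha> \<inter> F \<noteq> {}}"
proof -
  assume fin: "finite F"
  have "{\<alpha>. C \<alpha> \<inter> F \<noteq> {}} \<subseteq> (\<lambda>z. SOME \<alpha>. z \<in> C \<alpha>) ` F"
  proof
    fix \<alpha> assume "\<alpha> \<in> {\<alpha>. C \<alpha> \<inter> F \<noteq> {}}"
    then obtain z where z: "z \<in> C \<alpha>" "z \<in> F" by blast
    have "(SOME \<alpha>. z \<in> C \<alpha>) = \<alpha>" using z(1) Cuniq by (metis someI)
    thus "\<alpha> \<in> (\<lambda>z. SOME \<alpha>. z \<in> C \<alpha>) ` F" using z(2) by force
  qed
  thus ?thesis using fin finite_subset by blast
qed

lemma fresh: "finite F \<Longrightarrow> \<exists>y \<alpha>. y \<in> C \<alpha> \<and> C \<alpha> \<inter> F = {}"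
proof -
  assume "finite F"
  hence "finite {\<alpha>. C \<alpha> \<inter> F \<noteq> {}}" by (rule finite_hit)
  then obtain \<alpha> where "\<alpha> \<notin> {\<alpha>. C \<alpha> \<inter> F \<noteq> {}}" using infU by (metis ex_new_if_finite)
  moreover obtain y where "y \<in> C \<alpha>" using Cne by blast
  ultimately show ?thesis by blast
qed

lemma good_rho: "good \<rho>"
  unfolding good_def
proof (intro conjI allI impI)
  fix x show "\<rho> x x" using cover unfolding rho by blast
next
  fix x y assume "\<rho> x y" thus "\<rho> y x" unfolding rho by blast
next
  fix x y z assume xy: "\<rho> x y" and yz: "\<rho> y z"
  show "\<rho> x z"
  proof (cases "y \<in> A \<union> B")
    case True
    hence "x \<in> A \<union> B" "z \<in> A \<union> B" using xy yz CAB unfolding rho by blast+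
    thus ?thesis unfolding rho by blast
  next
    case False
    then obtain \<alpha> where "x \<in> C \<alpha>" "y \<in> C \<alpha>" using xy unfolding rho by blast
    moreover obtain \<beta> where "y \<in> C \<beta>" "z \<in> C \<beta>" using yz False unfolding rho by blast
    ultimately show ?thesis unfolding rho using Cuniq by metis
  qed
next
  fix x show "infinite {y. \<rho> x y}"
  proof (cases "x \<in> A \<union> B")
    case True
    hence "A \<subseteq> {y. \<rho> x y}" unfolding rho by blast
    thus ?thesis using infA finite_subset by blast
  next
    case False
    then obtain \<alpha> where "x \<in> C \<alpha>" using cover by blast
    hence "C \<alpha> \<subseteq> {y. \<rho> x y}" unfolding rho by blast
    thus ?thesis using Cinf finite_subset by blast
  qed
next
  fix F :: "'a set" assume "finite F"
  then obtain y \<alpha> where y: "y \<in> C \<alpha>" "C \<alpha> \<inter> F = {}" using fresh by blast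
  show "\<exists>y. \<forall>z\<in>F. \<not> \<rho> z y"
  proof (intro exI ballI)
    fix z assume "z \<in> F"
    thus "\<not> \<rho> z y" unfolding rho using y Cuniq CA CB by blast
  qed
qed

lemma good_sigma: "good \<sigma>"
  unfolding good_def
proof (intro conjI allI impI)
  fix x show "\<sigma> x x" using cover unfolding sigma by blast
next
  fix x y assume "\<sigma> x y" thus "\<sigma> y x" unfolding sigma by blast
next
  fix x y z assume xy: "\<sigma> x y" and yz: "\<sigma> y z"
  show "\<sigma> x z"
  proof (cases "y \<in> A")
    case True
    hence "x \<in> A" "z \<in> A" using xy yz CA AB unfolding sigma by blast+
    thus ?thesis unfolding sigma by blast
  next
    case F1: False
    show ?thesis
    proof (cases "y \<in> B")
      case True
      hence "x \<in> B" "z \<in> B" using xy yz CB AB unfolding sigma by blast+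
      thus ?thesis unfolding sigma by blast
    next
      case False
      then obtain \<alpha> where "x \<in> C \<alpha>" "y \<in> C \<alpha>" using xy F1 unfolding sigma by blast
      moreover obtain \<beta> where "y \<in> C \<beta>" "z \<in> C \<beta>" using yz F1 False unfolding sigma by blast
      ultimately show ?thesis unfolding sigma using Cuniq by metis
    qed
  qed
next
  fix x show "infinite {y. \<sigma> x y}"
  proof (cases "x \<in> A")
    case True
    hence "A \<subseteq> {y. \<sigma> x y}" unfolding sigma by blast
    thus ?thesis using infA finite_subset by blast
  next
    case F1: False
    show ?thesis
    proof (cases "x \<in> B")
      case True
      hence "B \<subseteq> {y. \<sigma> x y}" unfolding sigma by blast
      thus ?thesis using infB finite_subset by blast
    next
      case False
      then obtain \<alpha> where "x \<in> C \<alpha>" using cover F1 by blast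
      hence "C \<alpha> \<subseteq> {y. \<sigma> x y}" unfolding sigma by blast
      thus ?thesis using Cinf finite_subset by blast
    qed
  qed
next
  fix F :: "'a set" assume "finite F"
  then obtain y \<alpha> where y: "y \<in> C \<alpha>" "C \<alpha> \<inter> F = {}" using fresh by blast
  show "\<exists>y. \<forall>z\<in>F. \<not> \<sigma> z y"
  proof (intro exI ballI)
    fix z assume "z \<in> F"
    thus "\<not> \<sigma> z y" unfolding sigma using y Cuniq CA CB by blast
  qed
qed

lemma not_iso: "\<not> isomorphic \<rho> \<sigma>"
proof
  assume "isomorphic \<rho> \<sigma>"
  then obtain F where bF: "bij F" and iso: "\<And>x x'. \<rho> x x' \<longleftrightarrow> \<sigma> (F x) (F x')"
    unfolding isomorphic_def by blast
  have FI: "\<And>u. F (inv F u) = u" using bF by (simp add: bij_is_surj surj_f_inv_f)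
  have key: "\<And>x D. x \<notin> A \<union> B \<Longrightarrow> D \<subseteq> {u. \<sigma> (F x) u} \<Longrightarrow> countable D"
  proof -
    fix x D assume x: "x \<notin> A \<union> B" and D: "D \<subseteq> {u. \<sigma> (F x) u}"
    have "x \<in> A \<union> B \<union> (\<Union>\<alpha>. C \<alpha>)" using cover by simp
    then obtain \<alpha> where a: "x \<in> C \<alpha>" using x by blast
    have "D \<subseteq> F ` C \<alpha>"
    proof
      fix u assume "u \<in> D"
      hence "\<sigma> (F x) (F (inv F u))" using D unfolding FI by blast
      hence "\<rho> x (inv F u)" using iso[of x "inv F u"] by simp
      then obtain \<beta> where "x \<in> C \<beta>" "inv F u \<in> C \<beta>" unfolding rho using x by blast
      hence "inv F u \<in> C \<alpha>" using a Cuniq by metis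
      hence "F (inv F u) \<in> F ` C \<alpha>" by (rule imageI)
      thus "u \<in> F ` C \<alpha>" unfolding FI .
    qed
    moreover have "countable (F ` C \<alpha>)" using Ccnt by simp
    ultimately show "countable D" by (rule countable_subset)
  qed
  obtain a where a: "a \<in> A" using infA by (metis ex_in_conv finite.emptyI)
  obtain b where b: "b \<in> B" using infB by (metis ex_in_conv finite.emptyI)
  have "\<not> \<sigma> a b" unfolding sigma using a b AB CA by blast
  hence "\<not> \<rho> (inv F a) (inv F b)" using iso[of "inv F a" "inv F b"] FI by simp
  hence "inv F a \<notin> A \<union> B \<or> inv F b \<notin> A \<union> B" unfolding rho by blast
  thus False
  proof
    assume h: "inv F a \<notin> A \<union> B"
    have s: "A \<subseteq> {u. \<sigma> (F (inv F a)) u}" unfolding FI sigma using a by blast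
    show False using key[OF h s] uncA by simp
  next
    assume h: "inv F b \<notin> A \<union> B"
    have s: "B \<subseteq> {u. \<sigma> (F (inv F b)) u}" unfolding FI sigma using b by blast
    show False using key[OF h s] uncB by simp
  qed
qed

end

definition E :: "'b set \<Rightarrow> 'b set \<Rightarrow> 'b \<Rightarrow> 'b" where
  "E X Y = from_nat_into Y \<circ> inv_into UNIV (from_nat_into X)"

lemma bij_E: "countable X \<Longrightarrow> infinite X \<Longrightarrow> countable Y \<Longrightarrow> infinite Y \<Longrightarrow> bij_betw (E X Y) X Y"
  unfolding E_def
  by (rule bij_betw_trans[OF bij_betw_inv_into[OF bij_betw_from_nat_into] bij_betw_from_nat_into])

lemma bij_from_ordIso: "(card_of X, card_of Y) \<in> ordIso \<Longrightarrow> \<exists>f. bij_betw f X Y"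
  using card_of_ordIso by blast

lemma (in setting) cond_rho_sigma: "\<exists>F. condensation \<rho> \<sigma> F"
proof -
  have "(card_of (UNIV <+> UNIV :: ('a + 'a) set), card_of (UNIV :: 'a set)) \<in> ordIso"
    using card_of_Plus_infinite1[OF infU card_of_mono1[OF subset_refl]] .
  then obtain g where g: "bij_betw g (UNIV :: 'a set) (UNIV <+> UNIV :: ('a + 'a) set)"
    using bij_from_ordIso ordIso_symmetric by blast
  have ginj: "\<And>x y. g x = g y \<Longrightarrow> x = y" using g unfolding bij_betw_def inj_on_def by blast
  have gsurj: "\<And>s. \<exists>\<alpha>. g \<alpha> = s"
  proof -
    fix s :: "'a + 'a"
    have "s \<in> (UNIV <+> UNIV :: ('a + 'a) set)" by (cases s) auto
    thus "\<exists>\<alpha>. g \<alpha> = s" using g unfolding bij_betw_def by (metis imageE)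
  qed
  define J where "J = {\<alpha>. isl (g \<alpha>)}"
  define K where "K = {\<alpha>. \<not> isl (g \<alpha>)}"
  define p where "p = (\<lambda>\<alpha>. projr (g \<alpha>))"
  define q where "q = (\<lambda>\<alpha>. projl (g \<alpha>))"
  have gK: "\<And>\<alpha>. \<alpha> \<in> K \<Longrightarrow> g \<alpha> = Inr (p \<alpha>)" unfolding K_def p_def by (simp add: sum.collapse(2))
  have gJ: "\<And>\<alpha>. \<alpha> \<in> J \<Longrightarrow> g \<alpha> = Inl (q \<alpha>)" unfolding J_def q_def by (simp add: sum.collapse(1))
  have JK: "J \<union> K = UNIV" unfolding J_def K_def by blast
  have JKd: "\<And>\<alpha>. \<alpha> \<in> J \<Longrightarrow> \<alpha> \<notin> K" unfolding J_def K_def by blast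
  have p_inj: "\<And>\<alpha> \<beta>. \<alpha> \<in> K \<Longrightarrow> \<beta> \<in> K \<Longrightarrow> p \<alpha> = p \<beta> \<Longrightarrow> \<alpha> = \<beta>"
    using gK ginj by metis
  have p_surj: "\<And>\<gamma>. \<exists>\<alpha>\<in>K. p \<alpha> = \<gamma>"
  proof -
    fix \<gamma>
    obtain \<alpha> where "g \<alpha> = Inr \<gamma>" using gsurj by blast
    hence "\<alpha> \<in> K" "p \<alpha> = \<gamma>" unfolding K_def p_def by auto
    thus "\<exists>\<alpha>\<in>K. p \<alpha> = \<gamma>" by blast
  qed
  have bq: "bij_betw q J UNIV"
    unfolding bij_betw_def inj_on_def
  proof (intro conjI ballI impI)
    fix \<alpha> \<beta> assume "\<alpha> \<in> J" "\<beta> \<in> J" "q \<alpha> = q \<beta>"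
    thus "\<alpha> = \<beta>" using gJ ginj by metis
  next
    have "\<And>\<gamma>. \<gamma> \<in> q ` J"
    proof -
      fix \<gamma> obtain \<alpha> where "g \<alpha> = Inl \<gamma>" using gsurj by blast
      hence "\<alpha> \<in> J" "q \<alpha> = \<gamma>" unfolding J_def q_def by auto
      thus "\<gamma> \<in> q ` J" by blast
    qed
    thus "q ` J = UNIV" by blast
  qed
  define U where "U = (\<Union>\<alpha>\<in>J. C \<alpha>)"
  define V where "V = (\<Union>\<alpha>\<in>K. C \<alpha>)"
  define W where "W = (\<Union>\<gamma>. C \<gamma>)"
  have "(card_of U, card_of (UNIV :: 'a set)) \<in> ordLeq" by (rule card_of_mono1) simp
  moreover have "(card_of (UNIV :: 'a set), card_of U) \<in> ordLeq"
  proof -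
    define h where "h = (\<lambda>\<gamma>. SOME z. z \<in> C (inv_into J q \<gamma>))"
    have hC: "\<And>\<gamma>. h \<gamma> \<in> C (inv_into J q \<gamma>)" unfolding h_def using Cne by (rule someI_ex)
    have surjq: "\<And>\<gamma>. \<gamma> \<in> q ` J" using bq unfolding bij_betw_def by blast
    have iJ: "\<And>\<gamma>. inv_into J q \<gamma> \<in> J" using surjq by (rule inv_into_into)
    have fq: "\<And>\<gamma>. q (inv_into J q \<gamma>) = \<gamma>" using surjq by (rule f_inv_into_f)
    have "inj_on h UNIV"
    proof (rule inj_onI)
      fix \<gamma> \<delta> assume "h \<gamma> = h \<delta>"
      hence "inv_into J q \<gamma> = inv_into J q \<delta>" using hC[of \<gamma>] hC[of \<delta>] Cuniq by metis
      hence "q (inv_into J q \<gamma>) = q (inv_into J q \<delta>)" by simp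
      thus "\<gamma> = \<delta>" unfolding fq .
    qed
    moreover have "h ` UNIV \<subseteq> U" using hC iJ unfolding U_def by blast
    ultimately show ?thesis using card_of_ordLeq by blast
  qed
  ultimately have "(card_of U, card_of (UNIV :: 'a set)) \<in> ordIso" using ordIso_iff_ordLeq by blast
  hence "(card_of U, card_of B) \<in> ordIso" using cardB ordIso_symmetric ordIso_transitive by blast
  then obtain m where m: "bij_betw m U B" using bij_from_ordIso by blast
  have "(card_of (A \<union> B), card_of A) \<in> ordIso"
  proof -
    have "(card_of (A \<union> B), card_of (UNIV :: 'a set)) \<in> ordLeq" by (rule card_of_mono1) simp
    hence "(card_of (A \<union> B), card_of A) \<in> ordLeq" using cardA ordIso_symmetric ordLeq_ordIso_trans by blast
    moreover have "(card_of A, card_of (A \<union> B)) \<in> ordLeq" by (rule card_of_mono1) simp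
    ultimately show ?thesis using ordIso_iff_ordLeq by blast
  qed
  then obtain k where k: "bij_betw k (A \<union> B) A" using bij_from_ordIso by blast
  define idx where "idx = (\<lambda>x. SOME \<alpha>. x \<in> C \<alpha>)"
  have idx: "\<And>x \<alpha>. x \<in> C \<alpha> \<Longrightarrow> idx x = \<alpha>" unfolding idx_def using Cuniq by (metis someI)
  define F where "F = (\<lambda>x. if x \<in> A \<union> B then k x else if isl (g (idx x)) then m x else E (C (idx x)) (C (p (idx x))) x)"
  have bE: "\<And>\<alpha>. bij_betw (E (C \<alpha>) (C (p \<alpha>))) (C \<alpha>) (C (p \<alpha>))" using bij_E Ccnt Cinf by blast
  have FAB: "\<And>x. x \<in> A \<union> B \<Longrightarrow> F x = k x" unfolding F_def by simp
  have FU: "\<And>x \<alpha>. \<alpha> \<in> J \<Longrightarrow> x \<in> C \<alpha> \<Longrightarrow> F x = m x"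
  proof -
    fix x \<alpha> assume a: "\<alpha> \<in> J" "x \<in> C \<alpha>"
    have "x \<notin> A \<union> B" using CAB a(2) .
    moreover have "isl (g (idx x))" using a idx unfolding J_def by simp
    ultimately show "F x = m x" unfolding F_def by simp
  qed
  have FV: "\<And>x \<alpha>. \<alpha> \<in> K \<Longrightarrow> x \<in> C \<alpha> \<Longrightarrow> F x = E (C \<alpha>) (C (p \<alpha>)) x"
  proof -
    fix x \<alpha> assume a: "\<alpha> \<in> K" "x \<in> C \<alpha>"
    have "x \<notin> A \<union> B" using CAB a(2) .
    moreover have "\<not> isl (g (idx x))" using a idx unfolding K_def by simp
    ultimately show "F x = E (C \<alpha>) (C (p \<alpha>)) x" unfolding F_def using idx[OF a(2)] by simp
  qed
  have P1: "bij_betw F (A \<union> B) A"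
  proof -
    have "bij_betw F (A \<union> B) A = bij_betw k (A \<union> B) A" by (rule bij_betw_cong) (rule FAB)
    thus ?thesis using k by simp
  qed
  have P2: "bij_betw F U B"
  proof -
    have "bij_betw F U B = bij_betw m U B" by (rule bij_betw_cong) (use FU in \<open>auto simp: U_def\<close>)
    thus ?thesis using m by simp
  qed
  have FVC: "\<And>x \<alpha>. \<alpha> \<in> K \<Longrightarrow> x \<in> C \<alpha> \<Longrightarrow> F x \<in> C (p \<alpha>)"
    using FV bE bij_betw_apply by metis
  have P3: "bij_betw F V W"
    unfolding bij_betw_def
  proof
    show "inj_on F V"
    proof (rule inj_onI)
      fix x y assume x: "x \<in> V" and y: "y \<in> V" and e: "F x = F y"
      obtain \<alpha> where a: "\<alpha> \<in> K" "x \<in> C \<alpha>" using x unfolding V_def by blast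
      obtain \<beta> where b: "\<beta> \<in> K" "y \<in> C \<beta>" using y unfolding V_def by blast
      have "F x \<in> C (p \<alpha>)" "F y \<in> C (p \<beta>)" using FVC a b by blast+
      hence "p \<alpha> = p \<beta>" using e Cuniq by metis
      hence ab: "\<alpha> = \<beta>" using p_inj a(1) b(1) by blast
      have "E (C \<alpha>) (C (p \<alpha>)) x = E (C \<alpha>) (C (p \<alpha>)) y" using e FV a b unfolding ab by metis
      moreover have "inj_on (E (C \<alpha>) (C (p \<alpha>))) (C \<alpha>)" using bE bij_betw_def by blast
      ultimately show "x = y" using a(2) b(2) unfolding ab inj_on_def by blast
    qed
  next
    show "F ` V = W"
    proof
      show "F ` V \<subseteq> W" using FVC unfolding V_def W_def by blast
    next
      show "W \<subseteq> F ` V"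
      proof
        fix z assume "z \<in> W"
        then obtain \<gamma> where z: "z \<in> C \<gamma>" unfolding W_def by blast
        obtain \<alpha> where a: "\<alpha> \<in> K" "p \<alpha> = \<gamma>" using p_surj by blast
        have "z \<in> E (C \<alpha>) (C (p \<alpha>)) ` C \<alpha>" using bE[of \<alpha>] z a(2) unfolding bij_betw_def by blast
        then obtain x where x: "x \<in> C \<alpha>" "z = E (C \<alpha>) (C (p \<alpha>)) x" by blast
        have "F x = z" using FV[OF a(1) x(1)] x(2) by simp
        moreover have "x \<in> V" using a(1) x(1) unfolding V_def by blast
        ultimately show "z \<in> F ` V" by blast
      qed
    qed
  qed
  have c1: "bij_betw F ((A \<union> B) \<union> U) (A \<union> B)"
    by (rule bij_betw_combine[OF P1 P2]) (use AB in blast)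
  have c2: "bij_betw F ((A \<union> B \<union> U) \<union> V) ((A \<union> B) \<union> W)"
    by (rule bij_betw_combine[OF c1 P3]) (use CAB in \<open>auto simp: W_def\<close>)
  have e1: "A \<union> B \<union> U \<union> V = UNIV"
  proof (rule set_eqI, rule iffI)
    fix x :: 'a
    have "x \<in> A \<union> B \<union> (\<Union>\<alpha>. C \<alpha>)" using cover by simp
    thus "x \<in> A \<union> B \<union> U \<union> V"
    proof (elim UnE)
      fix X assume "x \<in> \<Union> (range C)"
      then obtain \<alpha> where a: "x \<in> C \<alpha>" by blast
      have "\<alpha> \<in> J \<or> \<alpha> \<in> K" using JK by (metis UNIV_I UnE)
      thus ?thesis using a unfolding U_def V_def by blast
    qed simp_all
  qed simp
  have e2: "A \<union> B \<union> W = UNIV" using cover unfolding W_def by simp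
  have bF: "bij F" using c2 unfolding e1 e2 bij_def .
  have "\<forall>x x'. \<rho> x x' \<longrightarrow> \<sigma> (F x) (F x')"
  proof (intro allI impI)
    fix x y assume "\<rho> x y"
    hence "(x \<in> A \<union> B \<and> y \<in> A \<union> B) \<or> (\<exists>\<alpha>. x \<in> C \<alpha> \<and> y \<in> C \<alpha>)" unfolding rho .
    thus "\<sigma> (F x) (F y)"
    proof
      assume "x \<in> A \<union> B \<and> y \<in> A \<union> B"
      hence "F x \<in> A" "F y \<in> A" using bij_betw_apply[OF P1] by auto
      thus ?thesis unfolding sigma by blast
    next
      assume "\<exists>\<alpha>. x \<in> C \<alpha> \<and> y \<in> C \<alpha>"
      then obtain \<alpha> where a: "x \<in> C \<alpha>" "y \<in> C \<alpha>" by blast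
      show ?thesis
      proof (cases "\<alpha> \<in> J")
        case True
        hence "x \<in> U" "y \<in> U" using a unfolding U_def by blast+
        hence "F x \<in> B" "F y \<in> B" using bij_betw_apply[OF P2] by auto
        thus ?thesis unfolding sigma by blast
      next
        case False
        hence "\<alpha> \<in> K" unfolding J_def K_def by simp
        hence "F x \<in> C (p \<alpha>)" "F y \<in> C (p \<alpha>)" using FVC[OF _ a(1)] FVC[OF _ a(2)] by auto
        thus ?thesis unfolding sigma by blast
      qed
    qed
  qed
  hence "condensation \<rho> \<sigma> F" using bF unfolding condensation_def by simp
  thus ?thesis by (rule exI[of _ F])
qed

lemma (in setting) sim: "sim_c \<rho> \<sigma>"
proof -
  have "condensation \<sigma> \<rho> id" unfolding condensation_def rho sigma by (simp add: bij_id)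
  thus ?thesis using cond_rho_sigma unfolding sim_c_def by blast
qed


theorem mainTheorem11:
  fixes A B :: "'a set" and C :: "'a \<Rightarrow> 'a set"
    and \<rho> \<sigma> :: "'a \<Rightarrow> 'a \<Rightarrow> bool"
  assumes omega1: "(card_of (UNIV :: 'a set), cardSuc natLeq) \<in> ordIso"
    and AB: "A \<inter> B = {}"
    and AC: "\<And>\<alpha>. A \<inter> C \<alpha> = {}"
    and BC: "\<And>\<alpha>. B \<inter> C \<alpha> = {}"
    and CC: "\<And>\<alpha> \<beta>. \<alpha> \<noteq> \<beta> \<Longrightarrow> C \<alpha> \<inter> C \<beta> = {}"
    and cover: "A \<union> B \<union> (\<Union>\<alpha>. C \<alpha>) = UNIV"
    and cardA: "(card_of A, card_of (UNIV :: 'a set)) \<in> ordIso"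
    and cardB: "(card_of B, card_of (UNIV :: 'a set)) \<in> ordIso"
    and cardC: "\<And>\<alpha>. countable (C \<alpha>) \<and> infinite (C \<alpha>)"
    and rho: "\<And>x y. \<rho> x y \<longleftrightarrow> (x \<in> A \<union> B \<and> y \<in> A \<union> B) \<or> (\<exists>\<alpha>. x \<in> C \<alpha> \<and> y \<in> C \<alpha>)"
    and sigma: "\<And>x y. \<sigma> x y \<longleftrightarrow> (x \<in> A \<and> y \<in> A) \<or> (x \<in> B \<and> y \<in> B) \<or> (\<exists>\<alpha>. x \<in> C \<alpha> \<and> y \<in> C \<alpha>)"
  shows "sim_c \<rho> \<sigma> \<and> inf_equiv TYPE('i) \<rho> \<sigma> \<and> \<not> isomorphic \<rho> \<sigma>"
proof -
  interpret S: setting A B C \<rho> \<sigma>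
    by (rule setting.intro[OF omega1 AB AC BC CC cover cardA cardB cardC rho sigma])
  show ?thesis using S.sim good_inf_equiv[OF S.good_rho S.good_sigma] S.not_iso by simp
qed

end
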